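(* Let $U$ be a countably infinite universe, $\mathcal{C}=(L_1,L_2,\ldots)$ a countably infinite collection of languages over $U$, and let $m^\star(L_i)$ be computed by the Procedure in the context. Any algorithm $\mathcal{G}$ that satisfies $t_{\mathcal{G}}(L_i)<m^\star(L_i)+1$ for some $i$ must satisfy $t_{\mathcal{G}}(L_j)>m^\star(L_j)+1$ for some $j<i$.
   Context: A language is an infinite subset of $U$; a collection is a sequence of languages (repetitions allowed, entries distinguished by index). An enumeration of $L$ is a sequence $x_1,x_2,\ldots$ with every $x_t\in L$ and every $x\in L$ equal to some $x_t$. A generating algorithm at each time $t\ge1$ receives $x_1,\ldots,x_t$ and outputs $z_t\in U$; $S_t$ is the set of distinct strings among $x_1,\ldots,x_t$. The generation time $t_{\mathcal{G}}(L_i)$ of an algorithm $\mathcal{G}$ for $L_i$ is the least number $s$ such that for every enumeration of $L_i$, $z_t\in L_i\setminus S_t$ for all $t$ with $|S_t|\ge s$ ($\infty$ if none). Procedure. Set $\mathcal{C}'_0=()$. For $i=1,2,3,\ldots$: append the entry $L_i$ at the end of $\mathcal{C}'_{i-1}$ to get $\mathcal{C}'_i=(L'_1,\ldots,L'_i)$, and set $j=i$. Repeat: (1) among all subcollections $\mathcal{D}$ of the entries $(L'_1,\ldots,L'_j)$ that include the entry $L'_j$ and satisfy $|\bigcap_{L\in\mathcal{D}}L|<\infty$, let $\mathcal{C}_{\mathrm{chk}}$ be one maximizing $|\bigcap_{L\in\mathcal{D}}L|$ and $m_{\mathrm{chk}}$ this maximum; if no such $\mathcal{D}$ exists, set $\mathcal{C}_{\mathrm{chk}}=()$,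 $m_{\mathrm{chk}}=0$. (2) If $j\le1$ or $m_{\mathrm{chk}}>m^\star(L'_{j-1})$, stop the loop. (3) Otherwise swap positions $j-1$ and $j$, set $j\leftarrow j-1$ and return to (1). When the loop stops, set $\mathcal{C}(L_i)=\mathcal{C}_{\mathrm{chk}}$ and $m^\star(L_i)=m_{\mathrm{chk}}$. *)

theory Defs
  imports Main "HOL-Library.Countable_Set" "HOL-Library.Extended_Nat"
begin

(* Enumerations are indexed from 1: x 1, x 2, ...  (x 0 is ignored). *)
definition is_enumeration :: "'u set \<Rightarrow> (nat \<Rightarrow> 'u) \<Rightarrow> bool" where
  "is_enumeration A x \<longleftrightarrow> (\<forall>t\<ge>1. x t \<in> A) \<and> (\<forall>y\<in>A. \<exists>t\<ge>1. x t = y)"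

definition prefix :: "(nat \<Rightarrow> 'u) \<Rightarrow> nat \<Rightarrow> 'u list" where
  "prefix x t = map x [1..<t+1]"

definition seen :: "(nat \<Rightarrow> 'u) \<Rightarrow> nat \<Rightarrow> 'u set" where
  "seen x t = x ` {1..t}"

definition gen_ok :: "('u list \<Rightarrow> 'u) \<Rightarrow> 'u set \<Rightarrow> nat \<Rightarrow> bool" where
  "gen_ok G A s \<longleftrightarrow> (\<forall>x. is_enumeration A x \<longrightarrow>
      (\<forall>t\<ge>1. card (seen x t) \<ge> s \<longrightarrow> G (prefix x t) \<in> A - seen x t))"

(* generation time; s ranges over positive integers (|S_t| >= 1 always) *)
definition gen_time :: "('u list \<Rightarrow> 'u) \<Rightarrow> 'u set \<Rightarrow> enat" where
  "gen_time G A = (if \<exists>s\<ge>1. gen_ok G A s then enat (LEAST s. s \<ge> 1 \<and> gen_ok G A s) else \<infinity>)"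

(* m_chk for the current order ord (list of original indices) at 0-based position j *)
definition mchk :: "(nat \<Rightarrow> 'u set) \<Rightarrow> nat list \<Rightarrow> nat \<Rightarrow> nat" where
  "mchk L ord j = Max (insert 0 {card (\<Inter>p\<in>D. L (ord ! p)) | D.
       D \<subseteq> {..j} \<and> j \<in> D \<and> finite (\<Inter>p\<in>D. L (ord ! p))})"

definition swap_adj :: "nat list \<Rightarrow> nat \<Rightarrow> nat list" where
  "swap_adj ord j = ord[j := ord ! Suc j, Suc j := ord ! j]"

(* The inner loop; ms gives m^* of previously inserted (original) indices. Returns new order and m_chk. *)
fun insert_loop :: "(nat \<Rightarrow> 'u set) \<Rightarrow> (nat \<Rightarrow> nat) \<Rightarrow> nat list \<Rightarrow> nat \<Rightarrow> nat list \<times> nat" where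
  "insert_loop L ms ord 0 = (ord, mchk L ord 0)"
| "insert_loop L ms ord (Suc j) =
     (let m = mchk L ord (Suc j) in
      if m > ms (ord ! j) then (ord, m) else insert_loop L ms (swap_adj ord j) j)"

(* After processing L_1..L_n: order C'_n (as original indices) and m^* values *)
fun procedure :: "(nat \<Rightarrow> 'u set) \<Rightarrow> nat \<Rightarrow> nat list \<times> (nat \<Rightarrow> nat)" where
  "procedure L 0 = ([], \<lambda>_. 0)"
| "procedure L (Suc n) =
     (let (ord, ms) = procedure L n;
          (ord', m) = insert_loop L ms (ord @ [Suc n]) n
      in (ord', ms(Suc n := m)))"

definition mstar :: "(nat \<Rightarrow> 'u set) \<Rightarrow> nat \<Rightarrow> nat" where
  "mstar L i = snd (procedure L i) i"

end

theory Submission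
  imports Defs
begin

definition enum :: "'u set \<Rightarrow> 'u list \<Rightarrow> nat \<Rightarrow> 'u" where
  "enum A xs t = (if t \<le> length xs then xs!(t-1) else from_nat_into A (t - length xs - 1))"

lemma enum_ok:
  assumes "set xs \<subseteq> A" "countable A" "A \<noteq> {}"
  shows "is_enumeration A (enum A xs)"
  unfolding is_enumeration_def
proof (intro conjI allI impI ballI)
  fix t :: nat assume "t \<ge> 1"
  show "enum A xs t \<in> A"
  proof (cases "t \<le> length xs")
    case True
    then have "xs!(t-1) \<in> set xs" using \<open>t \<ge> 1\<close> by simp
    then show ?thesis using True assms(1) by (auto simp: enum_def)
  next
    case False
    then show ?thesis using assms(3) by (simp add: enum_def from_nat_into)
  qed
next
  fix y assume "y \<in> A"
  define t where "t = to_nat_on A y + length xs + 1"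
  have "enum A xs t = y" unfolding t_def enum_def
    using from_nat_into_to_nat_on[OF assms(2) \<open>y \<in> A\<close>] by simp
  then show "\<exists>t\<ge>1. enum A xs t = y" unfolding t_def by (intro exI[of _ t]) (simp add: t_def)
qed

lemma enum_prefix: "prefix (enum A xs) (length xs) = xs"
  unfolding prefix_def by (rule nth_equalityI) (auto simp: enum_def nth_upt simp del: upt_Suc)

lemma enum_seen: "seen (enum A xs) (length xs) = set xs"
proof -
  have "seen (enum A xs) (length xs) = set (prefix (enum A xs) (length xs))"
    unfolding seen_def prefix_def by auto
  then show ?thesis by (simp add: enum_prefix)
qed

lemma mchk_mono:
  assumes "Suc j < length ord"
  shows "mchk L (swap_adj ord j) j \<le> mchk L ord (Suc j)"
proof -
  let ?o = "swap_adj ord j"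
  define f where "f p = (if p = j then Suc j else p)" for p :: nat
  have of: "?o ! p = ord ! (f p)" if "p \<le> j" for p
    using that assms unfolding swap_adj_def f_def by (auto simp: nth_list_update)
  let ?S = "{card (\<Inter>p\<in>D. L (?o ! p)) | D. D \<subseteq> {..j} \<and> j \<in> D \<and> finite (\<Inter>p\<in>D. L (?o ! p))}"
  let ?T = "{card (\<Inter>p\<in>D. L (ord ! p)) | D. D \<subseteq> {..Suc j} \<and> Suc j \<in> D \<and> finite (\<Inter>p\<in>D. L (ord ! p))}"
  have sub: "?S \<subseteq> ?T"
  proof
    fix c assume "c \<in> ?S"
    then obtain D where D: "c = card (\<Inter>p\<in>D. L (?o ! p))" "D \<subseteq> {..j}" "j \<in> D"
      "finite (\<Inter>p\<in>D. L (?o ! p))" by blast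
    have eq0: "(\<Inter>p\<in>D. L (?o ! p)) = (\<Inter>p\<in>D. L (ord ! f p))"
      using D(2) of by (intro arg_cong[where f=Inter] image_cong) auto
    have eq: "(\<Inter>p\<in>D. L (?o ! p)) = (\<Inter>p\<in>f ` D. L (ord ! p))"
      unfolding eq0 by simp
    have "f ` D \<subseteq> {..Suc j}" "Suc j \<in> f ` D" using D(2,3) unfolding f_def by force+
    then show "c \<in> ?T" using D eq by (intro CollectI exI[of _ "f ` D"]) simp
  qed
  have "?T \<subseteq> (\<lambda>D. card (\<Inter>p\<in>D. L (ord ! p))) ` Pow {..Suc j}" by blast
  then have fin: "finite ?T" by (rule finite_subset) simp
  show ?thesis unfolding mchk_def
    by (rule Max_mono) (use sub fin in auto)
qed

lemma loop:
  assumes "ord = a @ [new] @ b" "new \<notin> set (a @ b)"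
    "sorted_wrt (\<lambda>x y. ms x \<le> ms y) (a @ b)"
    "\<forall>x\<in>set b. mchk L ord (length a) \<le> ms x" "j = length a"
  shows "\<exists>a' b'. fst (insert_loop L ms ord j) = a' @ [new] @ b' \<and> a' @ b' = a @ b
    \<and> snd (insert_loop L ms ord j) = mchk L (fst (insert_loop L ms ord j)) (length a')
    \<and> (\<forall>x\<in>set a'. ms x < snd (insert_loop L ms ord j))
    \<and> (\<forall>x\<in>set b'. snd (insert_loop L ms ord j) \<le> ms x)"
  using assms
proof (induction j arbitrary: ord a b)
  case 0
  then show ?case by (intro exI[of _ "[]"] exI[of _ b]) auto
next
  case (Suc j)
  then obtain a0 y where a: "a = a0 @ [y]"
    by (metis length_Suc_conv_rev)
  have la0: "length a0 = j" using Suc.prems(5) a by simp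
  have oy: "ord ! j = y" using Suc.prems(1) a la0 by (simp add: nth_append)
  define m where "m = mchk L ord (Suc j)"
  show ?case
  proof (cases "m > ms y")
    case True
    have il: "insert_loop L ms ord (Suc j) = (ord, m)" using True oy by (simp add: m_def Let_def)
    have "\<forall>x\<in>set a. ms x < m"
    proof
      fix x assume "x \<in> set a"
      then have "x = y \<or> x \<in> set a0" using a by auto
      then show "ms x < m"
      proof
        assume "x \<in> set a0"
        then have "ms x \<le> ms y" using Suc.prems(3) a by (auto simp: sorted_wrt_append)
        then show ?thesis using True by simp
      qed (use True in simp)
    qed
    then show ?thesis using il Suc.prems by (intro exI[of _ a] exI[of _ b]) (auto simp: m_def)
  next
    case False
    have il: "insert_loop L ms ord (Suc j) = insert_loop L ms (swap_adj ord j) j"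
      using False oy by (simp add: m_def Let_def)
    have sw: "swap_adj ord j = a0 @ [new] @ (y # b)"
      using Suc.prems(1) a la0 unfolding swap_adj_def
      by (simp add: list_update_append nth_append)
    have len: "Suc j < length ord" using Suc.prems(1,5) by simp
    have mono: "mchk L (swap_adj ord j) j \<le> m" unfolding m_def by (rule mchk_mono[OF len])
    have inv: "\<forall>x\<in>set (y # b). mchk L (swap_adj ord j) (length a0) \<le> ms x"
      using mono False Suc.prems(4,5) la0 by (auto simp: m_def)
    have "\<exists>a' b'. fst (insert_loop L ms (swap_adj ord j) j) = a' @ [new] @ b' \<and> a' @ b' = a0 @ (y # b)
    \<and> snd (insert_loop L ms (swap_adj ord j) j) = mchk L (fst (insert_loop L ms (swap_adj ord j) j)) (length a')
    \<and> (\<forall>x\<in>set a'. ms x < snd (insert_loop L ms (swap_adj ord j) j))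
    \<and> (\<forall>x\<in>set b'. snd (insert_loop L ms (swap_adj ord j) j) \<le> ms x)"
    proof (rule Suc.IH[OF sw])
      show "new \<notin> set (a0 @ y # b)" using Suc.prems(2) a by simp
      show "sorted_wrt (\<lambda>x y. ms x \<le> ms y) (a0 @ y # b)" using Suc.prems(3) a by simp
      show "\<forall>x\<in>set (y # b). mchk L (swap_adj ord j) (length a0) \<le> ms x" by (rule inv)
      show "j = length a0" using la0 by simp
    qed
    then show ?thesis unfolding il using a by simp
  qed
qed

lemma proc_step:
  assumes "procedure L n = (ord, ms)"
  shows "procedure L (Suc n) = (fst (insert_loop L ms (ord @ [Suc n]) n),
           ms(Suc n := snd (insert_loop L ms (ord @ [Suc n]) n)))"
  using assms by (simp add: case_prod_beta)

lemma proc_stable: "k \<noteq> Suc n \<Longrightarrow> snd (procedure L (Suc n)) k = snd (procedure L n) k"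
  using proc_step[of L n "fst (procedure L n)" "snd (procedure L n)"] by simp

lemma proc_mstar: "1 \<le> k \<Longrightarrow> k \<le> n \<Longrightarrow> snd (procedure L n) k = mstar L k"
proof (induction n)
  case 0 then show ?case by simp
next
  case (Suc n)
  show ?case
  proof (cases "k = Suc n")
    case True then show ?thesis by (simp add: mstar_def)
  next
    case False
    then have "k \<le> n" using Suc.prems by simp
    have "snd (procedure L (Suc n)) k = snd (procedure L n) k" by (rule proc_stable[OF False])
    also have "\<dots> = mstar L k" using Suc.IH Suc.prems(1) \<open>k \<le> n\<close> by blast
    finally show ?thesis .
  qed
qed

lemma proc_inv:
  "length (fst (procedure L n)) = n \<and> set (fst (procedure L n)) = {1..n}
   \<and> sorted_wrt (\<lambda>x y. snd (procedure L n) x \<le> snd (procedure L n) y) (fst (procedure L n))"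
proof (induction n)
  case 0 then show ?case by simp
next
  case (Suc n)
  obtain ord ms where p: "procedure L n = (ord, ms)" by (cases "procedure L n") auto
  have IH: "length ord = n" "set ord = {1..n}" "sorted_wrt (\<lambda>x y. ms x \<le> ms y) ord"
    using Suc p by auto
  define r where "r = insert_loop L ms (ord @ [Suc n]) n"
  have "\<exists>a' b'. fst r = a' @ [Suc n] @ b' \<and> a' @ b' = ord @ []
    \<and> snd r = mchk L (fst r) (length a')
    \<and> (\<forall>x\<in>set a'. ms x < snd r)
    \<and> (\<forall>x\<in>set b'. snd r \<le> ms x)"
    unfolding r_def by (rule loop) (use IH in auto)
  then obtain a' b' where ab: "fst r = a' @ [Suc n] @ b'" "a' @ b' = ord"
    "\<forall>x\<in>set a'. ms x < snd r" "\<forall>x\<in>set b'. snd r \<le> ms x" by auto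
  have ps: "procedure L (Suc n) = (fst r, ms(Suc n := snd r))"
    unfolding r_def by (rule proc_step[OF p])
  have "Suc n \<notin> set ord" using IH(2) by simp
  then have nin: "Suc n \<notin> set a'" "Suc n \<notin> set b'" using ab(2) by auto
  have sa: "sorted_wrt (\<lambda>x y. ms x \<le> ms y) a'" "sorted_wrt (\<lambda>x y. ms x \<le> ms y) b'"
    "\<forall>x\<in>set a'. \<forall>y\<in>set b'. ms x \<le> ms y"
    using IH(3) ab(2) by (auto simp: sorted_wrt_append)
  let ?ms = "ms(Suc n := snd r)"
  have eqa: "sorted_wrt (\<lambda>x y. ?ms x \<le> ?ms y) a'"
    using sa(1) nin(1) by (auto simp: sorted_wrt_iff_nth_less in_set_conv_nth)
  have eqb: "sorted_wrt (\<lambda>x y. ?ms x \<le> ?ms y) b'"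
    using sa(2) nin(2) by (auto simp: sorted_wrt_iff_nth_less in_set_conv_nth)
  have "sorted_wrt (\<lambda>x y. ?ms x \<le> ?ms y) (a' @ [Suc n] @ b')"
    unfolding sorted_wrt_append using eqa eqb sa(3) nin ab(3,4)
    by (auto intro: less_imp_le order.trans)
  moreover have "length (fst r) = Suc n" using ab(1,2) IH(1) by auto
  moreover have "set (fst r) = {1..Suc n}"
  proof -
    have "set (fst r) = set ord \<union> {Suc n}" using ab(1,2) by auto
    then show ?thesis using IH(2) by auto
  qed
  ultimately show ?case unfolding ps fst_conv snd_conv using ab(1) by simp
qed

lemma gen_ok_apply:
  assumes "gen_ok G A s" "is_enumeration A x" "1 \<le> t" "s \<le> card (seen x t)"
  shows "G (prefix x t) \<in> A - seen x t"
  using assms unfolding gen_ok_def by blast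

lemma gen_time_lt:
  assumes "gen_time G A < enat (m + 1)"
  shows "\<exists>s. 1 \<le> s \<and> s \<le> m \<and> gen_ok G A s"
proof -
  have ex: "\<exists>s\<ge>1. gen_ok G A s" 
  proof (rule ccontr)
    assume "\<not> (\<exists>s\<ge>1. gen_ok G A s)"
    then have "gen_time G A = \<infinity>" unfolding gen_time_def by (subst if_not_P) auto
    then show False using assms by simp
  qed
  let ?s = "LEAST s. s \<ge> 1 \<and> gen_ok G A s"
  have "?s \<ge> 1 \<and> gen_ok G A ?s" using LeastI_ex[of "\<lambda>s. s \<ge> 1 \<and> gen_ok G A s"] ex by blast
  moreover have "?s \<le> m" using assms ex by (simp add: gen_time_def)
  ultimately show ?thesis by blast
qed

lemma gen_time_gt:
  assumes "\<And>s. 1 \<le> s \<Longrightarrow> s \<le> m \<Longrightarrow> \<not> gen_ok G A s"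
  shows "gen_time G A > enat m"
proof (cases "\<exists>s\<ge>1. gen_ok G A s")
  case True
  let ?s = "LEAST s. s \<ge> 1 \<and> gen_ok G A s"
  have "?s \<ge> 1 \<and> gen_ok G A ?s" using LeastI_ex[of "\<lambda>s. s \<ge> 1 \<and> gen_ok G A s"] True by blast
  then have "?s > m" using assms[of ?s] by (meson not_le)
  then show ?thesis using True by (simp add: gen_time_def)
next
  case False
  have "gen_time G A = \<infinity>" unfolding gen_time_def using False by (subst if_not_P) auto
  then show ?thesis by simp
qed

lemma mchk_in:
  assumes "mchk L ord j > 0"
  obtains D where "D \<subseteq> {..j}" "j \<in> D" "finite (\<Inter>p\<in>D. L (ord ! p))"
     "card (\<Inter>p\<in>D. L (ord ! p)) = mchk L ord j"
proof -
  define T where "T = {card (\<Inter>p\<in>D. L (ord ! p)) | D. D \<subseteq> {..j} \<and> j \<in> D \<and> finite (\<Inter>p\<in>D. L (ord ! p))}"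
  have md: "mchk L ord j = Max (insert 0 T)" unfolding mchk_def T_def ..
  have "T \<subseteq> (\<lambda>D. card (\<Inter>p\<in>D. L (ord ! p))) ` Pow {..j}" unfolding T_def by blast
  then have fin: "finite T" by (rule finite_subset) simp
  have "Max (insert 0 T) \<in> insert 0 T" by (rule Max_in) (simp_all add: fin)
  then have "mchk L ord j \<in> insert 0 T" unfolding md .
  then have "mchk L ord j \<in> T" using assms by (elim insertE) simp_all
  then obtain D where D: "mchk L ord j = card (\<Inter>p\<in>D. L (ord ! p))" "D \<subseteq> {..j}" "j \<in> D"
     "finite (\<Inter>p\<in>D. L (ord ! p))" unfolding T_def mem_Collect_eq by (elim exE conjE)
  show ?thesis by (rule that[of D]) (use D in simp_all)
qed

theorem mainTheorem11:
  fixes L :: "nat \<Rightarrow> 'u set" and G :: "'u list \<Rightarrow> 'u" and i :: nat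
  assumes "countable (UNIV :: 'u set)" and "infinite (UNIV :: 'u set)"
    and "\<forall>k\<ge>1. infinite (L k)"
    and "i \<ge> 1"
    and "gen_time G (L i) < enat (mstar L i + 1)"
  shows "\<exists>j. 1 \<le> j \<and> j < i \<and> gen_time G (L j) > enat (mstar L j + 1)"
proof -
  obtain n where i: "i = Suc n" using assms(4) by (cases i) auto
  define ord where "ord = fst (procedure L n)"
  define ms where "ms = snd (procedure L n)"
  have p: "procedure L n = (ord, ms)" unfolding ord_def ms_def by simp
  have IH: "length ord = n" "set ord = {1..n}" "sorted_wrt (\<lambda>x y. ms x \<le> ms y) ord"
    using proc_inv[of L n] unfolding ord_def ms_def by auto
  define r where "r = insert_loop L ms (ord @ [Suc n]) n"
  have "\<exists>a' b'. fst r = a' @ [Suc n] @ b' \<and> a' @ b' = ord @ []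
    \<and> snd r = mchk L (fst r) (length a')
    \<and> (\<forall>x\<in>set a'. ms x < snd r)
    \<and> (\<forall>x\<in>set b'. snd r \<le> ms x)"
    unfolding r_def by (rule loop) (use IH in auto)
  then obtain a' b' where ab: "fst r = a' @ [Suc n] @ b'" "a' @ b' = ord"
    "snd r = mchk L (fst r) (length a')"
    "\<forall>x\<in>set a'. ms x < snd r" by auto
  have ps: "procedure L (Suc n) = (fst r, ms(Suc n := snd r))"
    unfolding r_def by (rule proc_step[OF p])
  define m where "m = snd r"
  have mi: "mstar L i = m" unfolding mstar_def i ps m_def by simp
  obtain s where s: "1 \<le> s" "s \<le> m" "gen_ok G (L i) s"
    using gen_time_lt assms(5) unfolding mi by blast
  define J where "J = length a'"
  define o' where "o' = fst r"
  have oJ: "o' ! J = i" unfolding o'_def J_def ab(1) i by simp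
  have oa: "o' ! p \<in> set a'" if "p < J" for p
    unfolding o'_def ab(1) using that J_def by (simp add: nth_append)
  have "mchk L o' J > 0" using s ab(3) unfolding m_def o'_def J_def by simp
  then obtain D where D: "D \<subseteq> {..J}" "J \<in> D"
    "finite (\<Inter>p\<in>D. L (o' ! p))" "card (\<Inter>p\<in>D. L (o' ! p)) = mchk L o' J"
    by (rule mchk_in)
  have mJ: "mchk L o' J = m" using ab(3) unfolding m_def o'_def J_def by simp
  define I where "I = (\<Inter>p\<in>D. L (o' ! p))"
  have Ii: "I \<subseteq> L i" unfolding I_def using D(2) oJ by blast
  have finI: "finite I" using D(3) unfolding I_def .
  obtain xs where xs: "distinct xs" "set xs = I" using finite_distinct_list[OF finI] by blast
  have lxs: "length xs = m" using distinct_card[OF xs(1)] xs(2) D(4) mJ unfolding I_def by simp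
  have sc: "card (seen (enum A xs) m) = m" for A
    using enum_seen[of A xs] lxs distinct_card[OF xs(1)] by simp
  have m1: "m \<ge> 1" using s by simp
  have cnt: "countable (L k)" for k by (rule countable_subset[OF subset_UNIV assms(1)])
  have ne: "L k \<noteq> {}" if "k \<ge> 1" for k
  proof
    assume "L k = {}"
    moreover have "infinite (L k)" using assms(3) that by simp
    ultimately show False by simp
  qed
  have en: "is_enumeration (L i) (enum (L i) xs)"
    by (rule enum_ok[OF _ cnt ne[OF assms(4)]]) (simp add: xs(2) Ii)
  have "G (prefix (enum (L i) xs) m) \<in> L i - seen (enum (L i) xs) m"
    by (rule gen_ok_apply[OF s(3) en m1]) (simp add: sc s(2))
  then have z: "G xs \<in> L i" "G xs \<notin> I"
    using enum_prefix[of "L i" xs] enum_seen[of "L i" xs] lxs xs by auto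
  have "\<exists>p\<in>D. G xs \<notin> L (o' ! p)" using z(2) unfolding I_def by simp
  then obtain p where pD: "p \<in> D" and zn: "G xs \<notin> L (o' ! p)" by blast
  have "p \<noteq> J" using zn z(1) oJ by auto
  then have "p < J" using pD D(1) by auto
  then have ka: "o' ! p \<in> set a'" by (rule oa)
  define k where "k = o' ! p"
  have k: "k \<in> {1..n}" using ka ab(2) IH(2) unfolding k_def by auto
  have msk: "ms k < m" using ab(4) ka unfolding k_def m_def by auto
  have mk: "mstar L k = ms k" using proc_mstar[of k n L] k unfolding ms_def by auto
  have Ik: "set xs \<subseteq> L k" using xs pD unfolding I_def k_def by auto
  have "gen_time G (L k) > enat m"
  proof (rule gen_time_gt)
    fix s' assume s': "1 \<le> s'" "s' \<le> m"
    show "\<not> gen_ok G (L k) s'"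
    proof
      assume g: "gen_ok G (L k) s'"
      have en': "is_enumeration (L k) (enum (L k) xs)"
        by (rule enum_ok[OF Ik cnt ne]) (use k in simp)
      have "G (prefix (enum (L k) xs) m) \<in> L k - seen (enum (L k) xs) m"
        by (rule gen_ok_apply[OF g en' m1]) (simp add: sc s'(2))
      then have "G xs \<in> L k" using enum_prefix[of "L k" xs] lxs by auto
      then show False using zn unfolding k_def by simp
    qed
  qed
  moreover have "enat (mstar L k + 1) \<le> enat m" using msk mk by simp
  ultimately have "gen_time G (L k) > enat (mstar L k + 1)" by (rule order.strict_trans1[rotated])
  moreover have "1 \<le> k" "k < i" using k i by auto
  ultimately show ?thesis by blast
qed

end
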